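(* Let $n\ge2$ and $\Delta\subset B_n$ a proper ideal. The face numbers $f_j(\mathrm{Bier}(B_n,\Delta))$, $0\le j\le n-1$, depend only on $n$ and the differences $f_i(\Delta)-f_{n-i}(\Delta)$, $0\le i\le\lfloor\frac{n-1}2\rfloor$.
   Context: $B_n$ is the Boolean lattice of subsets of $[1,n]$. A proper ideal $\Delta\subset B_n$ is a nonempty family of subsets of $[1,n]$ closed under taking subsets with $[1,n]\notin\Delta$; $f_i(\Delta)$ is the number of sets of cardinality $i$ in $\Delta$. The Bier sphere $\mathrm{Bier}(B_n,\Delta)$ is the simplicial complex whose faces are the pairs $(B,C)$ with $B\subsetneq C\subseteq[1,n]$, $B\in\Delta$, $C\notin\Delta$, with $(B',C')$ a face of $(B,C)$ iff $B'\subseteq B$ and $C\subseteq C'$; the face $(B,C)$ has $|B|+n-|C|$ vertices. $f_j(\mathrm{Bier}(B_n,\Delta))$ is its number of faces with $j$ vertices. *)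

theory Defs
  imports Main
begin

definition proper_ideal :: "nat \<Rightarrow> nat set set \<Rightarrow> bool" where
  "proper_ideal n D \<longleftrightarrow> D \<subseteq> Pow {1..n} \<and> D \<noteq> {} \<and>
     (\<forall>A\<in>D. \<forall>B. B \<subseteq> A \<longrightarrow> B \<in> D) \<and> {1..n} \<notin> D"

definition ideal_f :: "nat set set \<Rightarrow> nat \<Rightarrow> nat" where
  "ideal_f D i = card {A \<in> D. card A = i}"

definition bier_faces :: "nat \<Rightarrow> nat set set \<Rightarrow> (nat set \<times> nat set) set" where
  "bier_faces n D = {(B, C). B \<subset> C \<and> C \<subseteq> {1..n} \<and> B \<in> D \<and> C \<notin> D}"

definition bier_face_vertices :: "nat \<Rightarrow> nat set \<times> nat set \<Rightarrow> nat" where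
  "bier_face_vertices n F = card (fst F) + n - card (snd F)"

definition bier_f :: "nat \<Rightarrow> nat set set \<Rightarrow> nat \<Rightarrow> nat" where
  "bier_f n D j = card {F \<in> bier_faces n D. bier_face_vertices n F = j}"

end

theory Submission
  imports Defs
begin

lemma card_supersets:
  assumes "B \<subseteq> {1..n::nat}"
  shows "card {C. B \<subseteq> C \<and> C \<subseteq> {1..n} \<and> card C = card B + k} = (n - card B) choose k"
proof -
  have fB: "finite B" using assms finite_subset by blast
  have eq: "{C. B \<subseteq> C \<and> C \<subseteq> {1..n} \<and> card C = card B + k}
      = (\<lambda>X. B \<union> X) ` {X. X \<subseteq> {1..n} - B \<and> card X = k}"
  proof (rule set_eqI, rule iffI)
    fix C assume "C \<in> {C. B \<subseteq> C \<and> C \<subseteq> {1..n} \<and> card C = card B + k}"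
    hence C: "B \<subseteq> C" "C \<subseteq> {1..n}" "card C = card B + k" by auto
    have fC: "finite C" using C(2) finite_subset by blast
    have "card (C - B) = k" using C fB by (simp add: card_Diff_subset)
    moreover have "C = B \<union> (C - B)" using C by auto
    ultimately show "C \<in> (\<lambda>X. B \<union> X) ` {X. X \<subseteq> {1..n} - B \<and> card X = k}"
      using C by blast
  next
    fix C assume "C \<in> (\<lambda>X. B \<union> X) ` {X. X \<subseteq> {1..n} - B \<and> card X = k}"
    then obtain X where X: "X \<subseteq> {1..n} - B" "card X = k" "C = B \<union> X" by auto
    have "finite X" using X(1) finite_subset by blast
    moreover have "B \<inter> X = {}" using X(1) by blast
    ultimately have "card C = card B + k" using X fB by (simp add: card_Un_disjoint)
    thus "C \<in> {C. B \<subseteq> C \<and> C \<subseteq> {1..n} \<and> card C = card B + k}" using X assms by auto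
  qed
  have inj: "inj_on (\<lambda>X. B \<union> X) {X. X \<subseteq> {1..n} - B \<and> card X = k}"
    by (rule inj_onI) blast
  have "card ({1..n} - B) = n - card B" using assms fB by (simp add: card_Diff_subset)
  thus ?thesis unfolding eq card_image[OF inj] using n_subsets[of "{1..n} - B" k] by simp
qed

lemma card_subsets_k:
  assumes "finite (C::nat set)"
  shows "card {B. B \<subseteq> C \<and> card C = card B + k} = card C choose k"
proof (cases "k \<le> card C")
  case True
  have "{B. B \<subseteq> C \<and> card C = card B + k} = {B. B \<subseteq> C \<and> card B = card C - k}"
    using True by auto
  thus ?thesis using n_subsets[OF assms, of "card C - k"] True
    by (simp add: binomial_symmetric[symmetric])
next
  case False
  hence "{B. B \<subseteq> C \<and> card C = card B + k} = {}" by auto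
  thus ?thesis using False by simp
qed

lemma sum_group_card:
  fixes g :: "nat \<Rightarrow> int"
  assumes "D \<subseteq> Pow {1..n}"
  shows "(\<Sum>A\<in>D. g (card A)) = (\<Sum>i\<le>n. int (ideal_f D i) * g i)"
proof -
  have fD: "finite D" using assms finite_subset by (metis finite_Pow_iff finite_atLeastAtMost)
  have cn: "card A \<le> n" if "A \<in> D" for A
    using that assms card_mono[of "{1..n}" A] by auto
  have "(\<Sum>A\<in>D. g (card A)) = (\<Sum>A\<in>D. \<Sum>i\<le>n. if card A = i then g i else 0)"
    by (rule sum.cong) (auto simp: cn)
  also have "\<dots> = (\<Sum>i\<le>n. \<Sum>A\<in>D. if card A = i then g i else 0)"
    by (rule sum.swap)
  also have "\<dots> = (\<Sum>i\<le>n. int (ideal_f D i) * g i)"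
  proof (rule sum.cong)
    fix i
    have "(\<Sum>A\<in>D. if card A = i then g i else 0) = (\<Sum>A\<in>{A \<in> D. card A = i}. g i)"
      using fD by (simp add: sum.If_cases Int_def conj_commute)
    also have "\<dots> = int (ideal_f D i) * g i" by (simp add: ideal_f_def)
    finally show "(\<Sum>A\<in>D. if card A = i then g i else 0) = int (ideal_f D i) * g i" .
  qed simp
  finally show ?thesis .
qed

lemma bier_count:
  assumes sub: "D \<subseteq> Pow {1..n}" and dc: "\<forall>A\<in>D. \<forall>B. B \<subseteq> A \<longrightarrow> B \<in> D"
    and j: "j < n"
  shows "int (bier_f n D j) =
     (\<Sum>i\<le>n. int (ideal_f D i) * (int ((n - i) choose (n - j)) - int (i choose (n - j))))"
proof -
  define k where "k = n - j"
  have k1: "k \<ge> 1" using j k_def by simp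
  define S where "S = (\<lambda>B. {C. B \<subseteq> C \<and> C \<subseteq> {1..n} \<and> card C = card B + k})"
  define T where "T = (\<lambda>C::nat set. {B. B \<subseteq> C \<and> card C = card B + k})"
  define P where "P = Sigma D S"
  define Q where "Q = (\<lambda>(C,B). (B,C)) ` Sigma D T"
  have fD: "finite D" using sub finite_subset by (metis finite_Pow_iff finite_atLeastAtMost)
  have fin_sub: "finite X" if "X \<subseteq> {1..n}" for X using that finite_subset by blast
  have QP: "Q \<subseteq> P"
  proof
    fix x assume "x \<in> Q"
    then obtain C B where x: "x = (B, C)" "C \<in> D" "B \<in> T C" unfolding Q_def by auto
    have "B \<subseteq> C" "card C = card B + k" using x(3) unfolding T_def by auto
    moreover have "B \<in> D" using dc x(2) \<open>B \<subseteq> C\<close> by blast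
    moreover have "C \<subseteq> {1..n}" using sub x(2) by auto
    ultimately show "x \<in> P" unfolding P_def S_def x(1) by simp
  qed
  have eq: "{F \<in> bier_faces n D. bier_face_vertices n F = j} = P - Q"
  proof (rule set_eqI)
    fix F :: "nat set \<times> nat set"
    obtain B C where F: "F = (B, C)" by fastforce
    show "F \<in> {F \<in> bier_faces n D. bier_face_vertices n F = j} \<longleftrightarrow> F \<in> P - Q"
    proof
      assume "F \<in> {F \<in> bier_faces n D. bier_face_vertices n F = j}"
      hence h: "B \<subset> C" "C \<subseteq> {1..n}" "B \<in> D" "C \<notin> D" "card B + n - card C = j"
        by (auto simp: F bier_faces_def bier_face_vertices_def)
      have "card C \<le> n" using h(2) card_mono[of "{1..n}" C] by auto
      hence "card C = card B + k" using h(5) j k_def by linarith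
      moreover have "F \<notin> Q" using h(4) unfolding F Q_def by auto
      ultimately show "F \<in> P - Q" using h unfolding F P_def S_def by auto
    next
      assume a: "F \<in> P - Q"
      hence h0: "B \<subseteq> C" "C \<subseteq> {1..n}" "B \<in> D" "card C = card B + k"
        unfolding F P_def S_def by auto
      have "C \<notin> D"
      proof
        assume "C \<in> D"
        hence "(C, B) \<in> Sigma D T" using h0 unfolding T_def by simp
        hence "F \<in> Q" unfolding Q_def F by force
        thus False using a by simp
      qed
      note h = h0(1,2,3) this h0(4)
      have "card C \<le> n" using h(2) card_mono[of "{1..n}" C] by auto
      hence "card B + n - card C = j" using h(5) j k_def by linarith
      moreover have "B \<noteq> C" using h(5) k1 by auto
      ultimately show "F \<in> {F \<in> bier_faces n D. bier_face_vertices n F = j}"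
        using h by (auto simp: F bier_faces_def bier_face_vertices_def)
    qed
  qed
  have finS: "finite (S B)" for B unfolding S_def
    by (rule finite_subset[of _ "Pow {1..n}"]) auto
  have finT: "finite (T C)" if "C \<in> D" for C
  proof -
    have "C \<subseteq> {1..n}" using that sub by auto
    hence "finite C" by (rule fin_sub)
    have "T C \<subseteq> Pow C" unfolding T_def by auto
    thus ?thesis using \<open>finite C\<close> by (simp add: finite_subset)
  qed
  have fP: "finite P" unfolding P_def using fD finS by auto
  have cP: "card P = (\<Sum>B\<in>D. (n - card B) choose k)"
  proof -
    have "card P = (\<Sum>B\<in>D. card (S B))" unfolding P_def using fD finS by simp
    also have "\<dots> = (\<Sum>B\<in>D. (n - card B) choose k)"
    proof (rule sum.cong)
      fix B assume "B \<in> D"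
      hence "B \<subseteq> {1..n}" using sub by auto
      thus "card (S B) = (n - card B) choose k" unfolding S_def by (rule card_supersets)
    qed simp
    finally show ?thesis .
  qed
  have injQ: "inj_on (\<lambda>(C,B). (B,C)) (Sigma D T)" by (rule inj_onI) auto
  have cQ: "card Q = (\<Sum>C\<in>D. card C choose k)"
  proof -
    have "card Q = (\<Sum>C\<in>D. card (T C))" unfolding Q_def card_image[OF injQ] using fD finT by simp
    also have "\<dots> = (\<Sum>C\<in>D. card C choose k)"
    proof (rule sum.cong)
      fix C assume "C \<in> D"
      hence "C \<subseteq> {1..n}" using sub by auto
      hence "finite C" by (rule fin_sub)
      thus "card (T C) = card C choose k" unfolding T_def by (rule card_subsets_k)
    qed simp
    finally show ?thesis .
  qed
  have "int (bier_f n D j) = int (card P) - int (card Q)"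
    unfolding bier_f_def eq using QP fP card_Diff_subset[OF finite_subset[OF QP fP] QP] card_mono[OF fP QP]
    by (simp add: of_nat_diff)
  also have "\<dots> = (\<Sum>B\<in>D. int ((n - card B) choose k) - int (card B choose k))"
    unfolding cP cQ by (simp add: sum_subtractf)
  also have "\<dots> = (\<Sum>i\<le>n. int (ideal_f D i) * (int ((n - i) choose k) - int (i choose k)))"
    by (rule sum_group_card[OF sub, of "\<lambda>i. int ((n - i) choose k) - int (i choose k)"])
  finally show ?thesis unfolding k_def .
qed


lemma sym_sum_zero:
  fixes g d :: "nat \<Rightarrow> int"
  assumes g: "\<And>i. i \<le> n \<Longrightarrow> g (n - i) = g i"
    and d: "\<And>i. i \<le> n \<Longrightarrow> d (n - i) = - d i"
  shows "(\<Sum>i\<le>n. g i * d i) = 0"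
proof -
  have "(\<Sum>i\<le>n. g i * d i) = (\<Sum>i\<in>{0..n}. g i * d i)" by (simp add: atLeast0AtMost)
  also have "\<dots> = (\<Sum>i\<in>{0..n}. g (n + 0 - i) * d (n + 0 - i))"
    by (rule sum.atLeastAtMost_rev)
  also have "\<dots> = (\<Sum>i\<in>{0..n}. - (g i * d i))"
    by (rule sum.cong) (auto simp: g d)
  also have "\<dots> = - (\<Sum>i\<le>n. g i * d i)" by (simp add: atLeast0AtMost sum_negf)
  finally show ?thesis by simp
qed

theorem corollary10:
  fixes n :: nat and D D' :: "nat set set"
  assumes "n \<ge> 2"
    and "proper_ideal n D" and "proper_ideal n D'"
    and "\<forall>i \<le> (n - 1) div 2.
           int (ideal_f D i) - int (ideal_f D (n - i)) =
           int (ideal_f D' i) - int (ideal_f D' (n - i))"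
  shows "\<forall>j \<le> n - 1. bier_f n D j = bier_f n D' j"
proof (intro allI impI)
  fix j assume "j \<le> n - 1"
  hence j: "j < n" using assms(1) by simp
  define k where "k = n - j"
  define g where "g = (\<lambda>i. int (ideal_f D i) - int (ideal_f D' i))"
  define d where "d = (\<lambda>i. int ((n - i) choose k) - int (i choose k))"
  have H: "g i = g (n - i)" if "i \<le> (n - 1) div 2" for i
    using assms(4) that unfolding g_def by auto
  have gs: "g (n - i) = g i" if "i \<le> n" for i
  proof (cases "i \<le> (n - 1) div 2")
    case True thus ?thesis using H by simp
  next
    case False
    show ?thesis
    proof (cases "n - i \<le> (n - 1) div 2")
      case True
      have "g (n - i) = g (n - (n - i))" using H[OF True] .
      thus ?thesis using that by simp
    next
      case False2: False
      have "n - i = i" using False False2 that by linarith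
      thus ?thesis by simp
    qed
  qed
  have ds: "d (n - i) = - d i" if "i \<le> n" for i
    using that unfolding d_def by simp
  have sD: "D \<subseteq> Pow {1..n}" "\<forall>A\<in>D. \<forall>B. B \<subseteq> A \<longrightarrow> B \<in> D"
    using assms(2) unfolding proper_ideal_def by auto
  have sD': "D' \<subseteq> Pow {1..n}" "\<forall>A\<in>D'. \<forall>B. B \<subseteq> A \<longrightarrow> B \<in> D'"
    using assms(3) unfolding proper_ideal_def by auto
  have "int (bier_f n D j) - int (bier_f n D' j) = (\<Sum>i\<le>n. g i * d i)"
    unfolding bier_count[OF sD j] bier_count[OF sD' j] g_def d_def k_def
    by (simp add: sum_subtractf[symmetric] algebra_simps)
  also have "\<dots> = 0" by (rule sym_sum_zero) (use gs ds in auto)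
  finally show "bier_f n D j = bier_f n D' j" by simp
qed

end
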